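(* Let $n\geq 1$. Suppose $\mathbf A\subseteq\mathbf B$ are finite equidistributed measured boolean algebras ($\mathbf A$ a subalgebra of $\mathbf B$ with the restricted measure), $g$ is an automorphism of $\mathbf A$ and $f$ is an automorphism of $\mathbf B$ such that $f|_{\mathbf A}=g^n$. Then there is a finite equidistributed measured boolean algebra $\mathbf C$ containing $\mathbf B$ as a measured subalgebra and an automorphism $h$ of $\mathbf C$ extending $g$ such that $h^n|_{\mathbf B}=f$. The same holds with "equidistributed" replaced throughout by "equidistributed dyadic".
   Context: A finite boolean algebra equipped with a finitely additive probability measure is equidistributed if all its atoms have the same positive measure, and equidistributed dyadic if it has $2^k$ atoms each of measure $2^{-k}$ for some $k\ge 0$. For equidistributed algebras every automorphism (permutation of atoms) is measure preserving. *)

theory Defs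
  imports "HOL-Probability.Probability"
begin

text \<open>A finite measured boolean algebra is represented concretely as a finite algebra of
  sets (the measurable sets of a measure) carrying a probability measure.  Every finite
  boolean algebra is isomorphic to such a set algebra, and on a finite algebra finite
  additivity coincides with countable additivity.\<close>

definition finite_mba :: "'a measure \<Rightarrow> bool" where
  "finite_mba M \<longleftrightarrow> prob_space M \<and> finite (sets M)"

definition mba_atom :: "'a measure \<Rightarrow> 'a set \<Rightarrow> bool" where
  "mba_atom M a \<longleftrightarrow> a \<in> sets M \<and> a \<noteq> {} \<and> (\<forall>b\<in>sets M. b \<subseteq> a \<longrightarrow> b = {} \<or> b = a)"

definition equidistributed :: "'a measure \<Rightarrow> bool" where
  "equidistributed M \<longleftrightarrow> finite_mba M \<and>
     (\<exists>c::real. c > 0 \<and> (\<forall>a. mba_atom M a \<longrightarrow> measure M a = c))"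

definition equidistributed_dyadic :: "'a measure \<Rightarrow> bool" where
  "equidistributed_dyadic M \<longleftrightarrow> finite_mba M \<and>
     (\<exists>k::nat. card {a. mba_atom M a} = 2 ^ k \<and>
        (\<forall>a. mba_atom M a \<longrightarrow> measure M a = 1 / 2 ^ k))"

definition measured_subalgebra :: "'a measure \<Rightarrow> 'a measure \<Rightarrow> bool" where
  "measured_subalgebra A B \<longleftrightarrow> space A = space B \<and> sets A \<subseteq> sets B \<and>
     (\<forall>X\<in>sets A. measure A X = measure B X)"

definition ba_automorphism :: "'a measure \<Rightarrow> ('a set \<Rightarrow> 'a set) \<Rightarrow> bool" where
  "ba_automorphism M f \<longleftrightarrow> bij_betw f (sets M) (sets M) \<and>
     (\<forall>X\<in>sets M. \<forall>Y\<in>sets M. f (X \<union> Y) = f X \<union> f Y) \<and>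
     (\<forall>X\<in>sets M. f (space M - X) = space M - f X)"

text \<open>Embedding of measured boolean algebras: injective boolean homomorphism preserving
  the measure.  "C contains B as a measured subalgebra" is read up to isomorphism via
  such an embedding.\<close>
definition mba_embedding :: "'a measure \<Rightarrow> 'b measure \<Rightarrow> ('a set \<Rightarrow> 'b set) \<Rightarrow> bool" where
  "mba_embedding B C e \<longleftrightarrow> inj_on e (sets B) \<and> e ` sets B \<subseteq> sets C \<and>
     (\<forall>X\<in>sets B. \<forall>Y\<in>sets B. e (X \<union> Y) = e X \<union> e Y) \<and>
     (\<forall>X\<in>sets B. e (space B - X) = space C - e X) \<and>
     (\<forall>X\<in>sets B. measure C (e X) = measure B X)"

end

theory Submission
  imports Defs
begin


declare [[simproc del: measurable]]

definition atoms :: "'a measure \<Rightarrow> 'a set set" where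
  "atoms M = {a. mba_atom M a}"

lemma atom_sets: "mba_atom M a \<Longrightarrow> a \<in> sets M" unfolding mba_atom_def by blast
lemma atom_ne: "mba_atom M a \<Longrightarrow> a \<noteq> {}" unfolding mba_atom_def by blast

lemma atom_sub: assumes "mba_atom M a" "b \<in> sets M" "b \<subseteq> a" shows "b = {} \<or> b = a"
proof -
  have "\<forall>b\<in>sets M. b \<subseteq> a \<longrightarrow> b = {} \<or> b = a" using assms(1) unfolding mba_atom_def by (elim conjE)
  then show ?thesis using assms(2,3) by simp
qed

lemma atoms_finite: "finite_mba M \<Longrightarrow> finite (atoms M)"
  unfolding finite_mba_def atoms_def
  by (rule finite_subset[of _ "sets M"]) (use atom_sets in blast, simp)

lemma atom_split: "mba_atom M a \<Longrightarrow> X \<in> sets M \<Longrightarrow> a \<subseteq> X \<or> a \<inter> X = {}"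
proof -
  assume a: "mba_atom M a" and X: "X \<in> sets M"
  have "a \<inter> X \<in> sets M" using atom_sets[OF a] X by (rule sets.Int)
  moreover have "\<forall>b\<in>sets M. b \<subseteq> a \<longrightarrow> b = {} \<or> b = a" using a unfolding mba_atom_def by (elim conjE)
  ultimately have "a \<inter> X = {} \<or> a \<inter> X = a" by (metis Int_lower1)
  then show ?thesis by (metis Int_lower2)
qed

lemma atom_disj: assumes "mba_atom M a" "mba_atom M b" "a \<inter> b \<noteq> {}" shows "a = b"
proof -
  have "a \<subseteq> b" using atom_split[OF assms(1) atom_sets[OF assms(2)]] assms(3) by simp
  moreover have "b \<subseteq> a" using atom_split[OF assms(2) atom_sets[OF assms(1)]] assms(3) by (simp add: Int_commute)
  ultimately show ?thesis by simp
qed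

lemma atom_exists:
  assumes "finite_mba M" "X \<in> sets M" "x \<in> X"
  shows "\<exists>a. mba_atom M a \<and> x \<in> a \<and> a \<subseteq> X"
proof -
  define F where "F = {Y\<in>sets M. x \<in> Y \<and> Y \<subseteq> X}"
  have fin: "finite F" using assms(1) unfolding finite_mba_def F_def by auto
  have ne: "X \<in> F" using assms unfolding F_def by auto
  define Y0 where "Y0 = (\<Inter>Y\<in>F. Y)"
  have Y0s: "Y0 \<in> sets M" unfolding Y0_def
    by (rule sets.finite_INT) (use fin ne F_def in auto)
  have xY: "x \<in> Y0" "Y0 \<subseteq> X" using ne unfolding Y0_def F_def by auto
  have "mba_atom M Y0"
    unfolding mba_atom_def
  proof (intro conjI ballI impI)
    show "Y0 \<in> sets M" by fact
    show "Y0 \<noteq> {}" using xY by auto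
  next
    fix b assume b: "b \<in> sets M" "b \<subseteq> Y0"
    show "b = {} \<or> b = Y0"
    proof (cases "x \<in> b")
      case True
      then have "b \<in> F" using b xY unfolding F_def by auto
      then have "Y0 \<subseteq> b" unfolding Y0_def by auto
      then show ?thesis using b by auto
    next
      case False
      then have "Y0 - b \<in> F" using b xY Y0s unfolding F_def by auto
      then have "Y0 \<subseteq> Y0 - b" unfolding Y0_def by auto
      then show ?thesis using b by auto
    qed
  qed
  then show ?thesis using xY by auto
qed

lemma set_as_atoms:
  assumes "finite_mba M" "X \<in> sets M"
  shows "X = \<Union>{a\<in>atoms M. a \<subseteq> X}"
proof (intro equalityI subsetI)
  fix x assume "x \<in> X"
  then obtain a where "mba_atom M a" "x \<in> a" "a \<subseteq> X" using atom_exists[OF assms] by blast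
  then show "x \<in> \<Union>{a\<in>atoms M. a \<subseteq> X}" unfolding atoms_def by blast
qed auto

lemma measure_atoms:
  assumes "finite_mba M" "X \<in> sets M"
  shows "measure M X = (\<Sum>a\<in>{a\<in>atoms M. a \<subseteq> X}. measure M a)"
proof -
  interpret prob_space M using assms(1) by (simp add: finite_mba_def)
  have "measure M X = measure M (\<Union>a\<in>{a\<in>atoms M. a \<subseteq> X}. a)"
    using set_as_atoms[OF assms] by simp
  also have "\<dots> = (\<Sum>a\<in>{a\<in>atoms M. a \<subseteq> X}. measure M a)"
    apply (rule finite_measure_finite_Union)
    using atoms_finite[OF assms(1)] apply simp
     apply (auto simp: atoms_def atom_sets)[1]
    unfolding disjoint_family_on_def atoms_def using atom_disj by blast
  finally show ?thesis .
qed

lemma measure_equi: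
  assumes "finite_mba M" "X \<in> sets M" "\<And>a. mba_atom M a \<Longrightarrow> measure M a = c"
  shows "measure M X = c * card {a\<in>atoms M. a \<subseteq> X}"
  using measure_atoms[OF assms(1,2)] assms(3) by (simp add: atoms_def)

lemma equi_total:
  assumes "finite_mba M" "\<And>a. mba_atom M a \<Longrightarrow> measure M a = c"
  shows "c * card (atoms M) = 1"
proof -
  interpret prob_space M using assms(1) by (simp add: finite_mba_def)
  have "\<And>a. a \<in> atoms M \<Longrightarrow> a \<subseteq> space M"
    unfolding atoms_def using atom_sets sets.sets_into_space by (metis mem_Collect_eq)
  then have "{a\<in>atoms M. a \<subseteq> space M} = atoms M" by auto
  then show ?thesis using measure_equi[OF assms(1) sets.top assms(2)] prob_space by simp
qed



lemma aut_sets: "ba_automorphism M f \<Longrightarrow> X \<in> sets M \<Longrightarrow> f X \<in> sets M"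
  unfolding ba_automorphism_def bij_betw_def by auto

lemma aut_empty: assumes "ba_automorphism M f" shows "f {} = {}"
proof -
  have e: "{} \<in> sets M" by simp
  have "\<And>X. X \<in> sets M \<Longrightarrow> f {} \<subseteq> f X"
    using assms unfolding ba_automorphism_def by (metis Un_empty_left Un_upper1 e)
  then have "f {} \<subseteq> f (space M - {})" by simp
  also have "\<dots> = space M - f {}" using assms e unfolding ba_automorphism_def by blast
  finally show ?thesis using aut_sets[OF assms e] by auto
qed

lemma aut_mono_iff:
  assumes "ba_automorphism M f" "X \<in> sets M" "Y \<in> sets M"
  shows "f X \<subseteq> f Y \<longleftrightarrow> X \<subseteq> Y"
proof
  assume "X \<subseteq> Y"
  then have "f Y = f X \<union> f Y" using assms unfolding ba_automorphism_def
    by (metis sup.absorb2)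
  then show "f X \<subseteq> f Y" by auto
next
  assume "f X \<subseteq> f Y"
  then have "f (X \<union> Y) = f Y" using assms unfolding ba_automorphism_def by auto
  then have "X \<union> Y = Y" using assms unfolding ba_automorphism_def bij_betw_def inj_on_def
    by (meson sets.Un)
  then show "X \<subseteq> Y" by auto
qed

lemma aut_atom:
  assumes "ba_automorphism M f" "mba_atom M a"
  shows "mba_atom M (f a)"
  unfolding mba_atom_def
proof (intro conjI ballI impI)
  have as: "a \<in> sets M" using assms(2) by (rule atom_sets)
  show "f a \<in> sets M" by (rule aut_sets[OF assms(1) as])
  show "f a \<noteq> {}"
  proof
    assume "f a = {}"
    then have "f a = f {}" using aut_empty[OF assms(1)] by simp
    then have "a = {}" using assms(1) as unfolding ba_automorphism_def bij_betw_def inj_on_def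
      by (meson sets.empty_sets)
    then show False using atom_ne[OF assms(2)] by simp
  qed
next
  fix b assume b: "b \<in> sets M" "b \<subseteq> f a"
  have as: "a \<in> sets M" using assms(2) by (rule atom_sets)
  obtain b' where b': "b' \<in> sets M" "b = f b'" using assms(1) b(1)
    unfolding ba_automorphism_def bij_betw_def by (metis imageE)
  then have "b' \<subseteq> a" using aut_mono_iff[OF assms(1) b'(1) as] b by simp
  then have "b' = {} \<or> b' = a" using atom_sub[OF assms(2) b'(1)] by simp
  then show "b = {} \<or> b = f a" using b' aut_empty[OF assms(1)] by auto
qed

lemma aut_funpow:
  assumes "ba_automorphism M f"
  shows "X \<in> sets M \<Longrightarrow> (f ^^ k) X \<in> sets M" "mba_atom M a \<Longrightarrow> mba_atom M ((f ^^ k) a)"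
  by (induction k) (auto intro: aut_sets[OF assms] aut_atom[OF assms])



locale ctx =
  fixes n :: nat and A B :: "'a measure" and g f :: "'a set \<Rightarrow> 'a set"
  assumes n1: "n \<ge> 1" and eA: "equidistributed A" and eB: "equidistributed B"
    and sub: "measured_subalgebra A B" and autA: "ba_automorphism A g"
    and autB: "ba_automorphism B f" and fg: "\<forall>X\<in>sets A. f X = (g ^^ n) X"
begin

lemma fA: "finite_mba A" and fB: "finite_mba B"
  using eA eB by (auto simp: equidistributed_def)

definition "PB = atoms B"
definition "QA = atoms A"
definition "Bat q = {b\<in>PB. b \<subseteq> q}"

lemma PB_in: "b \<in> PB \<Longrightarrow> mba_atom B b" and QA_in: "q \<in> QA \<Longrightarrow> mba_atom A q"
  by (auto simp: PB_def QA_def atoms_def)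

lemma QA_sets: "q \<in> QA \<Longrightarrow> q \<in> sets B"
  using sub atom_sets[OF QA_in] unfolding measured_subalgebra_def by auto

lemma space_eq: "space A = space B" using sub by (simp add: measured_subalgebra_def)

lemma alpha_ex: assumes "b \<in> PB" shows "\<exists>q\<in>QA. b \<subseteq> q"
proof -
  have b: "mba_atom B b" using PB_in[OF assms] .
  obtain x where x: "x \<in> b" using atom_ne[OF b] by auto
  have "b \<subseteq> space B" by (rule sets.sets_into_space[OF atom_sets[OF b]])
  then have xs: "x \<in> space A" using x space_eq by auto
  obtain q where q: "mba_atom A q" "x \<in> q" using atom_exists[OF fA sets.top xs] by auto
  have qQ: "q \<in> QA" using q by (simp add: QA_def atoms_def)
  have "b \<subseteq> q \<or> b \<inter> q = {}" by (rule atom_split[OF b QA_sets[OF qQ]])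
  then have "b \<subseteq> q" using x q by auto
  then show ?thesis using qQ by auto
qed

lemma alpha_uniq:
  assumes "b \<in> PB" "q \<in> QA" "q' \<in> QA" "b \<subseteq> q" "b \<subseteq> q'" shows "q = q'"
proof -
  have "b \<noteq> {}" using atom_ne[OF PB_in[OF assms(1)]] .
  then have "q \<inter> q' \<noteq> {}" using assms(4,5) by auto
  then show ?thesis using atom_disj[OF QA_in[OF assms(2)] QA_in[OF assms(3)]] by simp
qed

lemma below_iff:
  assumes "b \<in> PB" "q \<in> QA" "b \<subseteq> q" "X \<in> sets A" shows "b \<subseteq> X \<longleftrightarrow> q \<subseteq> X"
proof -
  have "q \<subseteq> X \<or> q \<inter> X = {}" by (rule atom_split[OF QA_in[OF assms(2)] assms(4)])
  moreover have "b \<noteq> {}" using atom_ne[OF PB_in[OF assms(1)]] .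
  ultimately show ?thesis using assms(3) by auto
qed

lemma PB_fin: "finite PB" using atoms_finite[OF fB] by (simp add: PB_def)
lemma QA_fin: "finite QA" using atoms_finite[OF fA] by (simp add: QA_def)

definition "cA = (SOME c::real. c > 0 \<and> (\<forall>a. mba_atom A a \<longrightarrow> measure A a = c))"
definition "cB = (SOME c::real. c > 0 \<and> (\<forall>a. mba_atom B a \<longrightarrow> measure B a = c))"

lemma cA: "cA > 0" "mba_atom A a \<Longrightarrow> measure A a = cA"
proof -
  have ex: "\<exists>c::real. c > 0 \<and> (\<forall>a. mba_atom A a \<longrightarrow> measure A a = c)" using eA by (simp add: equidistributed_def)
  have h: "cA > 0 \<and> (\<forall>a. mba_atom A a \<longrightarrow> measure A a = cA)" unfolding cA_def by (rule someI_ex[OF ex])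
  show "cA > 0" using h by (elim conjE)
  show "mba_atom A a \<Longrightarrow> measure A a = cA" using h by simp
qed

lemma cB: "cB > 0" "mba_atom B a \<Longrightarrow> measure B a = cB"
proof -
  have ex: "\<exists>c::real. c > 0 \<and> (\<forall>a. mba_atom B a \<longrightarrow> measure B a = c)" using eB by (simp add: equidistributed_def)
  have h: "cB > 0 \<and> (\<forall>a. mba_atom B a \<longrightarrow> measure B a = cB)" unfolding cB_def by (rule someI_ex[OF ex])
  show "cB > 0" using h by (elim conjE)
  show "mba_atom B a \<Longrightarrow> measure B a = cB" using h by simp
qed

lemma Bat_card_eq: assumes "q \<in> QA" shows "cB * card (Bat q) = cA"
proof -
  have "cA = measure A q" using cA(2)[OF QA_in[OF assms]] by simp
  also have "\<dots> = measure B q" using sub atom_sets[OF QA_in[OF assms]] by (simp add: measured_subalgebra_def)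
  also have "\<dots> = cB * card {a\<in>atoms B. a \<subseteq> q}" by (rule measure_equi[OF fB QA_sets[OF assms] cB(2)])
  finally show ?thesis by (simp add: Bat_def PB_def)
qed

lemma QA_ne: "QA \<noteq> {}"
proof -
  interpret prob_space A using fA by (simp add: finite_mba_def)
  have "space A \<noteq> {}" using not_empty .
  then obtain x where "x \<in> space A" by auto
  then obtain q where "mba_atom A q" using atom_exists[OF fA sets.top] by auto
  then show ?thesis by (auto simp: QA_def atoms_def)
qed

definition "m = card (Bat (SOME q. q \<in> QA))"

lemma card_Bat: "q \<in> QA \<Longrightarrow> card (Bat q) = m"
proof -
  assume q: "q \<in> QA"
  have q0: "(SOME q. q \<in> QA) \<in> QA" using QA_ne by (simp add: some_in_eq)
  have "cB * card (Bat q) = cB * card (Bat (SOME q. q \<in> QA))"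
    using Bat_card_eq[OF q] Bat_card_eq[OF q0] by simp
  then show ?thesis using cB(1) unfolding m_def by simp
qed

lemma Bat_ne: assumes "q \<in> QA" shows "Bat q \<noteq> {}"
proof -
  have "q = \<Union>{a\<in>atoms B. a \<subseteq> q}" by (rule set_as_atoms[OF fB QA_sets[OF assms]])
  moreover have "q \<noteq> {}" using atom_ne[OF QA_in[OF assms]] .
  ultimately show ?thesis by (auto simp: Bat_def PB_def)
qed

lemma Bat_fin: "finite (Bat q)" using PB_fin by (simp add: Bat_def)

lemma m_pos: "m \<ge> 1"
proof -
  obtain q where q: "q \<in> QA" using QA_ne by auto
  have "card (Bat q) > 0" using Bat_ne[OF q] Bat_fin by (simp add: card_gt_0_iff)
  then show ?thesis using card_Bat[OF q] by simp
qed

lemma Bat_disj: "\<forall>q\<in>QA. \<forall>q'\<in>QA. q \<noteq> q' \<longrightarrow> Bat q \<inter> Bat q' = {}"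
proof (intro ballI impI)
  fix q q' assume q: "q \<in> QA" "q' \<in> QA" "q \<noteq> q'"
  show "Bat q \<inter> Bat q' = {}"
  proof (rule ccontr)
    assume "Bat q \<inter> Bat q' \<noteq> {}"
    then obtain b where b: "b \<in> Bat q" "b \<in> Bat q'" by auto
    have "q = q'" using alpha_uniq[of b q q'] b q by (simp add: Bat_def)
    then show False using q by simp
  qed
qed

lemma PB_union: "PB = (\<Union>q\<in>QA. Bat q)"
proof (intro equalityI subsetI)
  fix b assume b: "b \<in> PB"
  obtain q where "q \<in> QA" "b \<subseteq> q" using alpha_ex[OF b] by auto
  then show "b \<in> (\<Union>q\<in>QA. Bat q)" using b by (auto simp: Bat_def)
qed (auto simp: Bat_def)

lemma PB_card: "card PB = m * card QA"
proof -
  have "card PB = (\<Sum>q\<in>QA. card (Bat q))"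
    unfolding PB_union by (rule card_UN_disjoint[OF QA_fin]) (use Bat_fin Bat_disj in auto)
  also have "\<dots> = (\<Sum>q\<in>QA. m)" using card_Bat by simp
  finally show ?thesis by simp
qed

lemma cB_total: "cB * card PB = 1" using equi_total[OF fB cB(2)] by (simp add: PB_def)
end


lemma bij_image_collect:
  assumes "bij_betw F S S" "\<And>w. w \<in> S \<Longrightarrow> P w \<longleftrightarrow> Q (F w)"
  shows "F ` {w\<in>S. P w} = {w\<in>S. Q w}"
proof
  show "F ` {w\<in>S. P w} \<subseteq> {w\<in>S. Q w}" using assms unfolding bij_betw_def by auto
next
  show "{w\<in>S. Q w} \<subseteq> F ` {w\<in>S. P w}"
  proof
    fix v assume v: "v \<in> {w\<in>S. Q w}"
    then obtain w where "w \<in> S" "v = F w" using assms(1) unfolding bij_betw_def by (metis (no_types, lifting) imageE mem_Collect_eq)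
    then show "v \<in> F ` {w\<in>S. P w}" using v assms(2) by auto
  qed
qed

context ctx begin

definition "Om = (\<Union>q\<in>QA. PiE {..<n} (\<lambda>i. Bat ((g ^^ i) q)))"
definition "H w = (\<lambda>i. if i < n - 1 then w (Suc i) else if i = n - 1 then f (w 0) else undefined)"
definition "ep X = {w\<in>Om. w 0 \<subseteq> X}"

lemma gQA: "q \<in> QA \<Longrightarrow> (g ^^ i) q \<in> QA"
  using aut_funpow(2)[OF autA] by (auto simp: QA_def atoms_def)

lemma Pi0: assumes "w \<in> PiE {..<n} T" shows "w 0 \<in> T 0"
  by (rule PiE_mem[OF assms]) (use n1 in simp)

lemma Om_fin: "finite Om"
  unfolding Om_def using QA_fin Bat_fin by (auto intro!: finite_PiE)

lemma Om_elim:
  assumes "w \<in> Om"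
  obtains q where "q \<in> QA" "w \<in> PiE {..<n} (\<lambda>i. Bat ((g ^^ i) q))"
  using assms unfolding Om_def by auto

lemma Om_0: assumes "w \<in> Om" shows "w 0 \<in> PB"
  using assms n1 by (auto simp: Om_def Bat_def)

lemma Om_0_sets: "w \<in> Om \<Longrightarrow> w 0 \<in> sets B"
  by (rule atom_sets[OF PB_in[OF Om_0]])

lemma H_comp:
  assumes "q \<in> QA" "w \<in> PiE {..<n} (\<lambda>i. Bat ((g ^^ i) q))"
  shows "H w \<in> PiE {..<n} (\<lambda>i. Bat ((g ^^ i) (g q)))"
proof -
  have w0: "w 0 \<in> Bat q" using Pi0[OF assms(2)] by simp
  have fw0: "f (w 0) \<in> PB" using aut_atom[OF autB PB_in] w0 by (auto simp: Bat_def PB_def atoms_def)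
  have "f (w 0) \<subseteq> f q"
    using aut_mono_iff[OF autB _ QA_sets[OF assms(1)]] w0 PB_in atom_sets by (auto simp: Bat_def)
  also have "f q = (g ^^ n) q" using fg atom_sets[OF QA_in[OF assms(1)]] by auto
  also have "\<dots> = (g ^^ (n - 1)) (g q)" using n1 funpow_Suc_right[of "n-1" g] by simp
  finally have "f (w 0) \<in> Bat ((g ^^ (n - 1)) (g q))" using fw0 by (simp add: Bat_def)
  moreover have "\<And>i. i < n - 1 \<Longrightarrow> w (Suc i) \<in> Bat ((g ^^ i) (g q))"
  proof -
    fix i assume "i < n - 1"
    then have "Suc i \<in> {..<n}" by simp
    then have "w (Suc i) \<in> Bat ((g ^^ Suc i) q)" by (rule PiE_mem[OF assms(2)])
    moreover have "(g ^^ Suc i) q = (g ^^ i) (g q)" by (simp add: funpow_swap1)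
    ultimately show "w (Suc i) \<in> Bat ((g ^^ i) (g q))" by simp
  qed
  ultimately show ?thesis
  proof (intro PiE_I)
    fix x assume x: "x \<in> {..<n}"
    assume A1: "f (w 0) \<in> Bat ((g ^^ (n - 1)) (g q))"
      and A2: "\<And>i. i < n - 1 \<Longrightarrow> w (Suc i) \<in> Bat ((g ^^ i) (g q))"
    show "H w x \<in> Bat ((g ^^ x) (g q))"
    proof (cases "x < n - 1")
      case True then show ?thesis using A2 by (simp add: H_def)
    next
      case False then have "x = n - 1" using x by simp
      then show ?thesis using A1 by (simp add: H_def)
    qed
  next
    fix x assume "x \<notin> {..<n}"
    then have "\<not> x < n - 1" "x \<noteq> n - 1" using n1 by auto
    then show "H w x = undefined" by (simp add: H_def)
  qed
qed

lemma H_in: "w \<in> Om \<Longrightarrow> H w \<in> Om"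
proof -
  assume "w \<in> Om"
  then obtain q where q: "q \<in> QA" "w \<in> PiE {..<n} (\<lambda>i. Bat ((g ^^ i) q))" by (rule Om_elim)
  have "g q \<in> QA" using gQA[OF q(1), of 1] by simp
  then show "H w \<in> Om" using H_comp[OF q] unfolding Om_def by blast
qed

lemma H_inj: "inj_on H Om"
proof (rule inj_onI)
  fix w v assume w: "w \<in> Om" and v: "v \<in> Om" and eq: "H w = H v"
  have "f (w 0) = f (v 0)" using fun_cong[OF eq, of "n-1"] by (simp add: H_def)
  moreover have "inj_on f (sets B)" using autB unfolding ba_automorphism_def bij_betw_def by simp
  ultimately have w0eq: "w 0 = v 0" using Om_0_sets[OF w] Om_0_sets[OF v] by (simp add: inj_on_eq_iff)
  have ext: "w \<in> extensional {..<n}" "v \<in> extensional {..<n}"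
    using w v by (auto simp: Om_def PiE_def)
  show "w = v"
  proof
    fix i
    show "w i = v i"
    proof (cases i)
      case 0 then show ?thesis using w0eq by simp
    next
      case (Suc j)
      show ?thesis
      proof (cases "j < n - 1")
        case True
        then show ?thesis using fun_cong[OF eq, of j] Suc by (simp add: H_def)
      next
        case False
        then have "i \<notin> {..<n}" using Suc by auto
        then show ?thesis using ext by (simp add: extensional_def)
      qed
    qed
  qed
qed

lemma H_bij: "bij_betw H Om Om"
  unfolding bij_betw_def using H_inj endo_inj_surj[OF Om_fin _ H_inj] H_in by auto

lemma Hpow:
  assumes "w \<in> Om" "k \<le> n"
  shows "(H ^^ k) w = (\<lambda>i. if i < n then (if i + k < n then w (i + k) else f (w (i + k - n))) else undefined)"
  using assms(2)
proof (induction k)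
  case 0
  have "w \<in> extensional {..<n}" using assms(1) by (auto simp: Om_def PiE_def)
  then show ?case by (intro ext) (simp add: extensional_def)
next
  case (Suc k)
  then have IH: "(H ^^ k) w = (\<lambda>i. if i < n then (if i + k < n then w (i + k) else f (w (i + k - n))) else undefined)" by simp
  have k: "k < n" using Suc.prems by simp
  show ?case
  proof
    fix i
    have e: "(H ^^ Suc k) w i = H ((H ^^ k) w) i" by simp
    show "(H ^^ Suc k) w i = (if i < n then (if i + Suc k < n then w (i + Suc k) else f (w (i + Suc k - n))) else undefined)"
    proof (cases "i < n - 1")
      case True
      then have "Suc i < n" "i < n" by linarith+
      then show ?thesis unfolding e H_def IH using True by simp
    next
      case False
      show ?thesis
      proof (cases "i = n - 1")
        case True
        then have "i + Suc k - n = k" "\<not> i + Suc k < n" "i < n" using n1 by auto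
        then show ?thesis unfolding e H_def IH using k True by simp
      next
        case F2: False
        then have "\<not> i < n" using False by simp
        then show ?thesis unfolding e H_def using False F2 by simp
      qed
    qed
  qed
qed

lemma Hn0: "w \<in> Om \<Longrightarrow> (H ^^ n) w 0 = f (w 0)"
  using Hpow[of w n] n1 by simp

lemma Hn_bij: "bij_betw (H ^^ n) Om Om" by (rule bij_betw_funpow[OF H_bij])

end


lemma prod_if0: "(\<Prod>i<n. if i = 0 then 1 else (m::nat)) = m ^ (n - 1)"
  by (induction n) (auto simp: power_Suc2[symmetric] Suc_diff_1 power_commutes)

context ctx begin

definition "fib b = {w\<in>Om. w 0 = b}"

lemma fib_eq:
  assumes b: "b \<in> PB" and q: "q \<in> QA" "b \<subseteq> q"
  shows "fib b = PiE {..<n} (\<lambda>i. if i = 0 then {b} else Bat ((g ^^ i) q))"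
proof (intro equalityI subsetI)
  fix w assume w: "w \<in> fib b"
  then have wO: "w \<in> Om" and w0: "w 0 = b" by (auto simp: fib_def)
  obtain q' where q': "q' \<in> QA" "w \<in> PiE {..<n} (\<lambda>i. Bat ((g ^^ i) q'))" using wO by (rule Om_elim)
  have "w 0 \<in> Bat q'" using Pi0[OF q'(2)] by simp
  then have "q' = q" using alpha_uniq[OF b q'(1) q(1)] q(2) w0 by (auto simp: Bat_def)
  then show "w \<in> PiE {..<n} (\<lambda>i. if i = 0 then {b} else Bat ((g ^^ i) q))"
    using q'(2) w0 by (auto simp: PiE_def)
next
  fix w assume w: "w \<in> PiE {..<n} (\<lambda>i. if i = 0 then {b} else Bat ((g ^^ i) q))"
  have "w \<in> PiE {..<n} (\<lambda>i. Bat ((g ^^ i) q))"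
  proof (rule PiE_I)
    fix x assume x: "x \<in> {..<n}"
    have wx: "w x \<in> (if x = 0 then {b} else Bat ((g ^^ x) q))" by (rule PiE_mem[OF w x])
    show "w x \<in> Bat ((g ^^ x) q)"
    proof (cases "x = 0")
      case True then show ?thesis using wx b q(2) by (simp add: Bat_def)
    next
      case False then show ?thesis using wx by simp
    qed
  next
    fix x assume "x \<notin> {..<n}"
    then show "w x = undefined" using w by (simp add: PiE_def extensional_def)
  qed
  then have "w \<in> Om" using q(1) unfolding Om_def by blast
  moreover have "w 0 = b" using Pi0[OF w] by simp
  ultimately show "w \<in> fib b" by (simp add: fib_def)
qed

lemma fib_card: assumes b: "b \<in> PB" shows "card (fib b) = m ^ (n - 1)"
proof -
  obtain q where q: "q \<in> QA" "b \<subseteq> q" using alpha_ex[OF b] by auto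
  have "card (fib b) = (\<Prod>i<n. card (if i = 0 then {b} else Bat ((g ^^ i) q)))"
    unfolding fib_eq[OF b q] by (rule card_PiE) simp
  also have "\<dots> = (\<Prod>i<n. if i = 0 then 1 else m)"
    by (rule prod.cong) (auto simp: card_Bat[OF gQA[OF q(1)]])
  finally show ?thesis using prod_if0 by simp
qed

lemma ep_decomp: "X \<in> sets B \<Longrightarrow> ep X = (\<Union>b\<in>{b\<in>PB. b \<subseteq> X}. fib b)"
  unfolding ep_def fib_def using Om_0 by auto

lemma ep_card: assumes "X \<in> sets B" shows "card (ep X) = card {b\<in>PB. b \<subseteq> X} * m ^ (n - 1)"
proof -
  have "card (ep X) = (\<Sum>b\<in>{b\<in>PB. b \<subseteq> X}. card (fib b))"
    unfolding ep_decomp[OF assms]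
    by (rule card_UN_disjoint) (use PB_fin Om_fin in \<open>auto simp: fib_def\<close>)
  also have "\<dots> = (\<Sum>b\<in>{b\<in>PB. b \<subseteq> X}. m ^ (n - 1))" using fib_card by simp
  finally show ?thesis by simp
qed

lemma ep_space: "ep (space B) = Om"
  unfolding ep_def using Om_0_sets sets.sets_into_space by blast

lemma PB_space: "{b\<in>PB. b \<subseteq> space B} = PB"
  using PB_in atom_sets sets.sets_into_space by blast

lemma Om_card: "card Om = card PB * m ^ (n - 1)"
  using ep_card[OF sets.top] ep_space PB_space by simp

lemma Om_card_pos: "card Om > 0"
proof -
  have "card PB > 0" using PB_card m_pos QA_ne QA_fin by (simp add: card_gt_0_iff)
  then show ?thesis using Om_card m_pos by simp
qed

lemma ep_sub: "ep X \<subseteq> Om" by (auto simp: ep_def)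

lemma ep_Un: "X \<in> sets B \<Longrightarrow> Y \<in> sets B \<Longrightarrow> ep (X \<union> Y) = ep X \<union> ep Y"
proof -
  assume X: "X \<in> sets B" and Y: "Y \<in> sets B"
  have "\<And>w. w \<in> Om \<Longrightarrow> w 0 \<subseteq> X \<union> Y \<longleftrightarrow> w 0 \<subseteq> X \<or> w 0 \<subseteq> Y"
    using atom_split[OF PB_in[OF Om_0] X] atom_split[OF PB_in[OF Om_0] Y] atom_ne[OF PB_in[OF Om_0]]
    by blast
  then show ?thesis unfolding ep_def by auto
qed

lemma ep_compl: "X \<in> sets B \<Longrightarrow> ep (space B - X) = Om - ep X"
proof -
  assume X: "X \<in> sets B"
  have "\<And>w. w \<in> Om \<Longrightarrow> w 0 \<subseteq> space B - X \<longleftrightarrow> \<not> w 0 \<subseteq> X"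
    using atom_split[OF PB_in[OF Om_0] X] atom_ne[OF PB_in[OF Om_0]] Om_0_sets sets.sets_into_space
    by blast
  then show ?thesis unfolding ep_def by auto
qed

lemma ep_inj: assumes X: "X \<in> sets B" and Y: "Y \<in> sets B" and eq: "ep X = ep Y" shows "X = Y"
proof -
  have "\<And>b. b \<in> PB \<Longrightarrow> b \<subseteq> X \<longleftrightarrow> b \<subseteq> Y"
  proof -
    fix b assume b: "b \<in> PB"
    have "fib b \<noteq> {}" using fib_card[OF b] m_pos by (metis card.empty nat_less_le not_one_le_zero one_le_power)
    then obtain w where w: "w \<in> Om" "w 0 = b" by (auto simp: fib_def)
    then show "b \<subseteq> X \<longleftrightarrow> b \<subseteq> Y" using eq unfolding ep_def by blast
  qed
  then have "{a\<in>atoms B. a \<subseteq> X} = {a\<in>atoms B. a \<subseteq> Y}" by (auto simp: PB_def)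
  then show ?thesis using set_as_atoms[OF fB X] set_as_atoms[OF fB Y] by simp
qed

lemma ep_g: assumes X: "X \<in> sets A" shows "H ` ep X = ep (g X)"
  unfolding ep_def
proof (rule bij_image_collect[OF H_bij])
  fix w assume w: "w \<in> Om"
  obtain q where q: "q \<in> QA" "w \<in> PiE {..<n} (\<lambda>i. Bat ((g ^^ i) q))" using w by (rule Om_elim)
  have w0: "w 0 \<in> Bat q" using Pi0[OF q(2)] by simp
  have gq: "g q \<in> QA" using gQA[OF q(1), of 1] by simp
  have h0: "H w 0 \<in> Bat (g q)" using Pi0[OF H_comp[OF q]] by simp
  have "w 0 \<subseteq> X \<longleftrightarrow> q \<subseteq> X" using below_iff[OF _ q(1) _ X] w0 by (auto simp: Bat_def)
  also have "\<dots> \<longleftrightarrow> g q \<subseteq> g X" using aut_mono_iff[OF autA atom_sets[OF QA_in[OF q(1)]] X] by simp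
  also have "\<dots> \<longleftrightarrow> H w 0 \<subseteq> g X" using below_iff[OF _ gq _ aut_sets[OF autA X]] h0 by (auto simp: Bat_def)
  finally show "w 0 \<subseteq> X \<longleftrightarrow> H w 0 \<subseteq> g X" .
qed

lemma ep_f: assumes X: "X \<in> sets B" shows "(H ^^ n) ` ep X = ep (f X)"
  unfolding ep_def
proof (rule bij_image_collect[OF Hn_bij])
  fix w assume w: "w \<in> Om"
  show "w 0 \<subseteq> X \<longleftrightarrow> (H ^^ n) w 0 \<subseteq> f X"
    using Hn0[OF w] aut_mono_iff[OF autB Om_0_sets[OF w] X] by simp
qed

lemma ep_measure: assumes X: "X \<in> sets B"
  shows "real (card (ep X)) / real (card Om) = measure B X"
proof -
  have mp: "real m ^ (n - 1) > 0" using m_pos by simp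
  have "measure B X = cB * card {a\<in>atoms B. a \<subseteq> X}" by (rule measure_equi[OF fB X cB(2)])
  also have "cB = 1 / card PB" using cB_total Om_card_pos Om_card
    by (metis div_by_1 divide_divide_eq_right mult.commute mult_1 nonzero_mult_div_cancel_left zero_neq_one)
  finally have "measure B X = card {b\<in>PB. b \<subseteq> X} / card PB" by (simp add: PB_def)
  moreover have "m \<noteq> 0" using m_pos by simp
  ultimately show ?thesis using mp by (simp add: ep_card[OF X] Om_card)
qed

end


lemma uc_atom:
  assumes "finite S"
  shows "mba_atom (uniform_count_measure S) a \<longleftrightarrow> (\<exists>x\<in>S. a = {x})"
proof
  assume a: "mba_atom (uniform_count_measure S) a"
  have aS: "a \<subseteq> S" using atom_sets[OF a] by (simp add: sets_uniform_count_measure)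
  obtain x where x: "x \<in> a" using atom_ne[OF a] by auto
  have xs: "{x} \<in> sets (uniform_count_measure S)" using aS x by (auto simp: sets_uniform_count_measure)
  have "{x} \<subseteq> a" using x by simp
  then have "{x} = {} \<or> {x} = a" by (rule atom_sub[OF a xs])
  then show "\<exists>x\<in>S. a = {x}" using x aS by auto
next
  assume "\<exists>x\<in>S. a = {x}"
  then obtain x where x: "x \<in> S" "a = {x}" by auto
  show "mba_atom (uniform_count_measure S) a"
    unfolding mba_atom_def sets_uniform_count_measure using x by (auto simp: subset_singleton_iff)
qed

lemma uc_atoms_card:
  assumes "finite S" shows "card {a. mba_atom (uniform_count_measure S) a} = card S"
proof -
  have "{a. mba_atom (uniform_count_measure S) a} = (\<lambda>x. {x}) ` S" using uc_atom[OF assms] by auto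
  moreover have "inj_on (\<lambda>x. {x}) S" by (auto simp: inj_on_def)
  ultimately show ?thesis by (simp add: card_image)
qed

lemma uc_atom_measure:
  assumes "finite S" "mba_atom (uniform_count_measure S) a"
  shows "measure (uniform_count_measure S) a = 1 / card S"
proof -
  obtain x where "x \<in> S" "a = {x}" using uc_atom[OF assms(1)] assms(2) by auto
  then show ?thesis using measure_uniform_count_measure[OF assms(1)] by simp
qed

lemma uc_finite_mba: "finite S \<Longrightarrow> S \<noteq> {} \<Longrightarrow> finite_mba (uniform_count_measure S)"
  unfolding finite_mba_def using prob_space_uniform_count_measure by (simp add: sets_uniform_count_measure)

context ctx begin

lemma core:
  "\<exists>(C::('a \<times> nat) measure) e h.
     equidistributed C \<and> mba_embedding B C e \<and> ba_automorphism C h \<and>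
     (\<forall>X\<in>sets A. h (e X) = e (g X)) \<and>
     (\<forall>X\<in>sets B. (h ^^ n) (e X) = e (f X)) \<and>
     card {a. mba_atom C a} = card Om \<and> (\<forall>a. mba_atom C a \<longrightarrow> measure C a = 1 / card Om)"
proof -
  define N where "N = card Om"
  define S :: "('a \<times> nat) set" where "S = {undefined} \<times> {..<N}"
  have finS: "finite S" by (simp add: S_def)
  have cardS: "card S = N" by (simp add: S_def card_cartesian_product)
  have Npos: "N > 0" using Om_card_pos by (simp add: N_def)
  have Sne: "S \<noteq> {}" using cardS Npos by auto
  obtain enc where enc: "bij_betw enc Om S"
    using finite_same_card_bij[OF Om_fin finS] cardS by (auto simp: N_def)
  have inj_enc: "inj_on enc Om" using enc by (rule bij_betw_imp_inj_on)
  have enc_img: "enc ` Om = S" using enc by (rule bij_betw_imp_surj_on)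
  define K where "K = enc \<circ> H \<circ> inv_into Om enc"
  have "bij_betw (enc \<circ> (H \<circ> inv_into Om enc)) S S"
    by (rule bij_betw_trans[OF bij_betw_trans[OF bij_betw_inv_into[OF enc] H_bij] enc])
  then have Kbij: "bij_betw K S S" unfolding K_def by (simp add: o_assoc)
  define C where "C = uniform_count_measure S"
  define h where "h = (\<lambda>Y. K ` Y)"
  define e where "e = (\<lambda>X. enc ` ep X)"
  have setsC: "sets C = Pow S" and spaceC: "space C = S"
    by (simp_all add: C_def sets_uniform_count_measure space_uniform_count_measure)
  have hK: "h (enc ` W) = enc ` H ` W" if W: "W \<subseteq> Om" for W
  proof -
    have "h (enc ` W) = enc ` H ` (inv_into Om enc ` enc ` W)" unfolding h_def K_def by (simp add: image_comp)
    also have "inv_into Om enc ` enc ` W = W" by (rule inv_into_image_cancel[OF inj_enc W])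
    finally show ?thesis .
  qed
  have hpow: "(h ^^ k) (enc ` W) = enc ` (H ^^ k) ` W" if W: "W \<subseteq> Om" for W k
  proof (induction k)
    case 0 then show ?case by simp
  next
    case (Suc k)
    have sub: "(H ^^ k) ` W \<subseteq> Om" using W bij_betw_funpow[OF H_bij, of k] unfolding bij_betw_def by auto
    have "(h ^^ Suc k) (enc ` W) = h (enc ` (H ^^ k) ` W)" using Suc by simp
    also have "\<dots> = enc ` H ` (H ^^ k) ` W" by (rule hK[OF sub])
    also have "\<dots> = enc ` (H ^^ Suc k) ` W" by (simp add: image_comp)
    finally show ?case .
  qed
  have eqC: "equidistributed C"
    unfolding equidistributed_def
  proof (intro conjI exI[of _ "1 / real N"])
    show "finite_mba C" unfolding C_def by (rule uc_finite_mba[OF finS Sne])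
    show "1 / real N > 0" using Npos by simp
    show "\<forall>a. mba_atom C a \<longrightarrow> measure C a = 1 / real N"
      using uc_atom_measure[OF finS] cardS unfolding C_def by simp
  qed
  have emb: "mba_embedding B C e"
    unfolding mba_embedding_def
  proof (intro conjI ballI)
    show "inj_on e (sets B)"
    proof (rule inj_onI)
      fix X Y assume X: "X \<in> sets B" and Y: "Y \<in> sets B" and eq: "e X = e Y"
      have "ep X = ep Y" using eq inj_on_image_eq_iff[OF inj_enc ep_sub ep_sub] unfolding e_def by simp
      then show "X = Y" by (rule ep_inj[OF X Y])
    qed
    show "e ` sets B \<subseteq> sets C" using ep_sub enc_img unfolding e_def setsC by auto
  next
    fix X Y assume X: "X \<in> sets B" and Y: "Y \<in> sets B"
    show "e (X \<union> Y) = e X \<union> e Y" unfolding e_def using ep_Un[OF X Y] by (simp add: image_Un)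
  next
    fix X assume X: "X \<in> sets B"
    have "enc ` (Om - ep X) = enc ` Om - enc ` ep X" by (rule inj_on_image_set_diff[OF inj_enc]) (auto simp: ep_sub)
    then show "e (space B - X) = space C - e X" unfolding e_def spaceC ep_compl[OF X] enc_img by simp
    have "card (enc ` ep X) = card (ep X)" using inj_on_subset[OF inj_enc ep_sub] by (rule card_image)
    moreover have "enc ` ep X \<subseteq> S" using ep_sub enc_img by (metis image_mono)
    ultimately show "measure C (e X) = measure B X"
      unfolding e_def C_def using measure_uniform_count_measure[OF finS, of "enc ` ep X"] ep_measure[OF X] cardS
      by (simp add: N_def)
  qed
  have aut: "ba_automorphism C h"
    unfolding ba_automorphism_def setsC spaceC
  proof (intro conjI ballI)
    show "bij_betw h (Pow S) (Pow S)" unfolding h_def by (rule bij_betw_Pow[OF Kbij])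
  next
    fix X Y assume "X \<in> Pow S" "Y \<in> Pow S"
    show "h (X \<union> Y) = h X \<union> h Y" by (simp add: h_def image_Un)
  next
    fix X assume X: "X \<in> Pow S"
    have "K ` (S - X) = K ` S - K ` X"
      by (rule inj_on_image_set_diff[OF bij_betw_imp_inj_on[OF Kbij]]) (use X in auto)
    then show "h (S - X) = S - h X" unfolding h_def using bij_betw_imp_surj_on[OF Kbij] by simp
  qed
  have gA: "\<forall>X\<in>sets A. h (e X) = e (g X)"
  proof
    fix X assume X: "X \<in> sets A"
    show "h (e X) = e (g X)" unfolding e_def using hK[OF ep_sub] ep_g[OF X] by simp
  qed
  have fB': "\<forall>X\<in>sets B. (h ^^ n) (e X) = e (f X)"
  proof
    fix X assume X: "X \<in> sets B"
    show "(h ^^ n) (e X) = e (f X)" unfolding e_def using hpow[OF ep_sub] ep_f[OF X] by simp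
  qed
  have catoms: "card {a. mba_atom C a} = card Om"
    unfolding C_def using uc_atoms_card[OF finS] cardS by (simp add: N_def)
  have cmeas: "\<forall>a. mba_atom C a \<longrightarrow> measure C a = 1 / card Om"
    using uc_atom_measure[OF finS] cardS unfolding C_def by (simp add: N_def)
  show ?thesis using eqC emb aut gA fB' catoms cmeas by blast
qed

end


lemma pow2_quot:
  assumes "(m::nat) * 2 ^ a = 2 ^ b" shows "m = 2 ^ (b - a)"
proof -
  have "m > 0" using assms by (metis gr0I mult_0 zero_less_numeral zero_less_power less_irrefl)
  then have "(2::nat) ^ a \<le> 2 ^ b" using assms by (metis le_add2 mult_le_mono1 mult_1 Suc_leI One_nat_def)
  then have ab: "a \<le> b" by simp
  then have "(2::nat) ^ b = 2 ^ (b - a) * 2 ^ a" by (metis le_add_diff_inverse2 power_add)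
  then show ?thesis using assms by simp
qed

lemma dyadic_equi: "equidistributed_dyadic M \<Longrightarrow> equidistributed M"
  unfolding equidistributed_dyadic_def equidistributed_def
proof (elim conjE exE)
  fix k assume "finite_mba M" "card {a. mba_atom M a} = 2 ^ k" "\<forall>a. mba_atom M a \<longrightarrow> measure M a = 1 / 2 ^ k"
  then show "finite_mba M \<and> (\<exists>c::real. c > 0 \<and> (\<forall>a. mba_atom M a \<longrightarrow> measure M a = c))"
    by (intro conjI exI[of _ "1 / 2 ^ k"]) auto
qed

context ctx begin
lemma dyadic_card:
  assumes "card PB = 2 ^ kB" "card QA = 2 ^ kA"
  shows "card Om = 2 ^ (kB + (kB - kA) * (n - 1))"
proof -
  have "m * 2 ^ kA = 2 ^ kB" using PB_card assms by simp
  then have m: "m = 2 ^ (kB - kA)" by (rule pow2_quot)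
  show ?thesis unfolding Om_card assms(1) m by (simp add: power_add power_mult)
qed
end

theorem mainTheorem5:
  fixes n :: nat
  assumes "n \<ge> 1"
  shows
  "(\<forall>(A::'a measure) (B::'a measure) g f.
      equidistributed A \<and> equidistributed B \<and> measured_subalgebra A B \<and>
      ba_automorphism A g \<and> ba_automorphism B f \<and> (\<forall>X\<in>sets A. f X = (g ^^ n) X) \<longrightarrow>
      (\<exists>(C::('a \<times> nat) measure) e h.
         equidistributed C \<and> mba_embedding B C e \<and> ba_automorphism C h \<and>
         (\<forall>X\<in>sets A. h (e X) = e (g X)) \<and>
         (\<forall>X\<in>sets B. (h ^^ n) (e X) = e (f X))))
   \<and>
   (\<forall>(A::'a measure) (B::'a measure) g f.
      equidistributed_dyadic A \<and> equidistributed_dyadic B \<and> measured_subalgebra A B \<and>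
      ba_automorphism A g \<and> ba_automorphism B f \<and> (\<forall>X\<in>sets A. f X = (g ^^ n) X) \<longrightarrow>
      (\<exists>(C::('a \<times> nat) measure) e h.
         equidistributed_dyadic C \<and> mba_embedding B C e \<and> ba_automorphism C h \<and>
         (\<forall>X\<in>sets A. h (e X) = e (g X)) \<and>
         (\<forall>X\<in>sets B. (h ^^ n) (e X) = e (f X))))"
proof (intro conjI allI impI)
  fix A B :: "'a measure" and g f
  assume H: "equidistributed A \<and> equidistributed B \<and> measured_subalgebra A B \<and>
      ba_automorphism A g \<and> ba_automorphism B f \<and> (\<forall>X\<in>sets A. f X = (g ^^ n) X)"
  interpret ctx n A B g f using assms H by unfold_locales auto
  show "\<exists>(C::('a \<times> nat) measure) e h.
         equidistributed C \<and> mba_embedding B C e \<and> ba_automorphism C h \<and>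
         (\<forall>X\<in>sets A. h (e X) = e (g X)) \<and>
         (\<forall>X\<in>sets B. (h ^^ n) (e X) = e (f X))"
    using core by (elim exE conjE) (intro exI conjI, assumption+)
next
  fix A B :: "'a measure" and g f
  assume H: "equidistributed_dyadic A \<and> equidistributed_dyadic B \<and> measured_subalgebra A B \<and>
      ba_automorphism A g \<and> ba_automorphism B f \<and> (\<forall>X\<in>sets A. f X = (g ^^ n) X)"
  interpret ctx n A B g f using assms H dyadic_equi by unfold_locales auto
  obtain kA where kA: "card {a. mba_atom A a} = 2 ^ kA"
    using H unfolding equidistributed_dyadic_def by auto
  obtain kB where kB: "card {a. mba_atom B a} = 2 ^ kB"
    using H unfolding equidistributed_dyadic_def by auto
  have cO: "card Om = 2 ^ (kB + (kB - kA) * (n - 1))"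
    by (rule dyadic_card) (use kA kB in \<open>simp_all add: PB_def QA_def atoms_def\<close>)
  obtain C :: "('a \<times> nat) measure" and e h where C:
     "equidistributed C" "mba_embedding B C e" "ba_automorphism C h"
     "\<forall>X\<in>sets A. h (e X) = e (g X)" "\<forall>X\<in>sets B. (h ^^ n) (e X) = e (f X)"
     "card {a. mba_atom C a} = card Om" "\<forall>a. mba_atom C a \<longrightarrow> measure C a = 1 / card Om"
    using core by (elim exE conjE) (rule that)
  have "equidistributed_dyadic C"
    unfolding equidistributed_dyadic_def
  proof (intro conjI exI[of _ "kB + (kB - kA) * (n - 1)"])
    show "finite_mba C" using C(1) by (simp add: equidistributed_def)
    show "card {a. mba_atom C a} = 2 ^ (kB + (kB - kA) * (n - 1))" using C(6) cO by simp
    show "\<forall>a. mba_atom C a \<longrightarrow> measure C a = 1 / 2 ^ (kB + (kB - kA) * (n - 1))"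
      using C(7) cO by simp
  qed
  then show "\<exists>(C::('a \<times> nat) measure) e h.
         equidistributed_dyadic C \<and> mba_embedding B C e \<and> ba_automorphism C h \<and>
         (\<forall>X\<in>sets A. h (e X) = e (g X)) \<and>
         (\<forall>X\<in>sets B. (h ^^ n) (e X) = e (f X))"
    using C(2-5) by (intro exI conjI)
qed


end
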